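(* Let $(\mathbf{V}_\tau,\mathbf{A}_\tau)$ satisfy $\mathbf{1}_N^\top\mathbf{V}_\tau=\mathbf{1}_N^\top$, $\mathbf{1}_T^\top\mathbf{A}_\tau=\mathbf{1}_N^\top$, $\mathbf{V}_\tau\boldsymbol\mu=\boldsymbol\mu$, and let $\mathbf{V}_{\tau+1}=\mathbf{V}_\tau-\eta_V\mathbb{E}\hat\nabla_{\mathbf{V}}l-\eta_V\mathbf{h}_{\mathbf{V},\tau}$ and $\mathbf{A}_{\tau+1}=\mathbf{A}_\tau-\eta_A\mathbb{E}\hat\nabla_{\mathbf{A}}l-\eta_A\mathbf{h}_{\mathbf{A},\tau}$ for step sizes $\eta_V,\eta_A>0$, where expectations are evaluated at $(\mathbf{V}_\tau,\mathbf{A}_\tau)$. Writing $\alpha_V,\alpha_A,\boldsymbol\Delta_V,\boldsymbol\Delta_A$ for the quantities at time $\tau$, $$\alpha_{V,\tau+1}=\alpha_{V,\tau}+\eta_VK_Q(1-\alpha_A\alpha_V)\alpha_A+\eta_V\frac{1-\alpha_V}{T}-\eta_V\alpha_V\|\boldsymbol\Delta_A\|_\mu^2-\frac{\eta_V}{K_P}\langle\mathbf{h}_{\mathbf{V},\tau},\mathbf{P}\rangle_\mu,$$ $$\alpha_{A,\tau+1}=\alpha_{A,\tau}+\eta_AK_P(1-\alpha_V\alpha_A)\alpha_V-\eta_A\alpha_A\|\boldsymbol\Delta_V\|_\mu^2-\frac{\eta_A}{K_Q}\langle\mathbf{h}_{\mathbf{A},\tau},\mathbf{Q}\rangle_\m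u.$$
   Context: $\boldsymbol\mu\in\mathbb{R}^N$ is a probability vector with positive entries; $\mathbf{P}\in\mathbb{R}^{N\times N}$ has nonnegative entries, columns summing to $1$, $\mathbf{P}\boldsymbol\mu=\boldsymbol\mu$; $\mathbf{Q}=(\mathbf{q}^{(1)},\dots,\mathbf{q}^{(N)})\in\mathbb{R}^{T\times N}$ has probability-vector columns. Data: $x_1,\dots,x_{T+1}$ i.i.d. with law $\boldsymbol\mu$, $x_o$ with $\Pr(x_o=n\mid x_{T+1}=k,x_1,\dots,x_T)=\sum_tq^{(k)}_tP_{n,x_t}$; $\mathbf{X}=(\mathbf{e}_{x_1},\dots,\mathbf{e}_{x_T})$; loss $l=\frac12\|\mathbf{e}_{x_o}-\mathbf{V}\mathbf{X}\mathbf{A}\mathbf{e}_{x_{T+1}}\|^2$. Preconditioned gradients: $\hat\nabla_{\mathbf{V}}l=(\mathbf{I}_N-\mathbf{1}\mathbf{1}^\top/N)(\nabla_{\mathbf{V}}l)\operatorname{diag}(1/\boldsymbol\mu)(\mathbf{I}_N-\boldsymbol\mu\boldsymbol\mu^\top/\|\boldsymbol\mu\|^2)$; $\hat\nabla_{\mathbf{A}}l$ has columns $\frac1{\mu_k}(\mathbf{I}_T-\mathbf{1}\mathbf{1}^\top/T)\nabla_{\mathbf{a}^{(k)}}l$. $\mathbf{h}_{\mathbf{V},\tau}=\hat\nabla^{(B)}_{\mathbf{V}}l-\mathbb{E}\hat\nabla_{\mathbf{V}}l$ and $\mathbf{h}_{\mathbf{A},\tau}=\hat\nabla^{(B)}_{\mathbf{A}}l-\mathbb{E}\hat\nabla_{\mathbf{A}}l$,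 where $\hat\nabla^{(B)}$ is the average of the preconditioned gradients over a mini-batch of $B$ fresh samples at step $\tau$. $\langle\mathbf{M},\mathbf{M}'\rangle_\mu=\operatorname{Tr}(\mathbf{M}\operatorname{diag}(\boldsymbol\mu)\mathbf{M}'^\top)$, $\|\mathbf{M}\|_\mu^2=\langle\mathbf{M},\mathbf{M}\rangle_\mu$. $K_P=\|\mathbf{P}\|_\mu^2-\|\boldsymbol\mu\|^2>0$, $K_Q=\|\mathbf{Q}\|_\mu^2-1/T>0$; for any iterate, $\alpha_V=(\langle\mathbf{V},\mathbf{P}\rangle_\mu-\|\boldsymbol\mu\|^2)/K_P$, $\alpha_A=(\langle\mathbf{A},\mathbf{Q}\rangle_\mu-1/T)/K_Q$, $\boldsymbol\Delta_V=\mathbf{V}-\alpha_V\mathbf{P}-(1-\alpha_V)\boldsymbol\mu\mathbf{1}^\top$, $\boldsymbol\Delta_A=\mathbf{A}-\alpha_A\mathbf{Q}-(1-\alpha_A)\mathbf{1}\mathbf{1}^\top/T$. *)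

theory Defs
  imports "HOL-Analysis.Analysis"
begin

text \<open>Conventions: vectors in R^N are functions nat => real indexed by 0..<N;
 matrices are functions nat => nat => real (row index first), an m x N matrix
 being indexed by rows 0..<m and columns 0..<N.  Tokens 1..N are 0..<N.
 A sample is a pair (xs, xo) where xs 0, ..., xs (T-1) are x_1..x_T,
 xs T is x_{T+1}, and xo is x_o.\<close>

type_synonym vec = "nat \<Rightarrow> real"
type_synonym mat = "nat \<Rightarrow> nat \<Rightarrow> real"

definition matmul :: "nat \<Rightarrow> mat \<Rightarrow> mat \<Rightarrow> mat" where
  "matmul n M M' = (\<lambda>i j. \<Sum>k<n. M i k * M' k j)"

definition ip_mu :: "nat \<Rightarrow> nat \<Rightarrow> vec \<Rightarrow> mat \<Rightarrow> mat \<Rightarrow> real" where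
  "ip_mu m N mu M M' = (\<Sum>i<m. \<Sum>j<N. M i j * mu j * M' i j)"

definition normsq_mu :: "nat \<Rightarrow> nat \<Rightarrow> vec \<Rightarrow> mat \<Rightarrow> real" where
  "normsq_mu m N mu M = ip_mu m N mu M M"

definition vnormsq :: "nat \<Rightarrow> vec \<Rightarrow> real" where
  "vnormsq N v = (\<Sum>i<N. (v i)^2)"

definition K_P :: "nat \<Rightarrow> vec \<Rightarrow> mat \<Rightarrow> real" where
  "K_P N mu P = normsq_mu N N mu P - vnormsq N mu"

definition K_Q :: "nat \<Rightarrow> nat \<Rightarrow> vec \<Rightarrow> mat \<Rightarrow> real" where
  "K_Q N T mu Q = normsq_mu T N mu Q - 1 / real T"

definition alpha_V :: "nat \<Rightarrow> vec \<Rightarrow> mat \<Rightarrow> mat \<Rightarrow> real" where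
  "alpha_V N mu P V = (ip_mu N N mu V P - vnormsq N mu) / K_P N mu P"

definition alpha_A :: "nat \<Rightarrow> nat \<Rightarrow> vec \<Rightarrow> mat \<Rightarrow> mat \<Rightarrow> real" where
  "alpha_A N T mu Q A = (ip_mu T N mu A Q - 1 / real T) / K_Q N T mu Q"

definition Delta_V :: "nat \<Rightarrow> vec \<Rightarrow> mat \<Rightarrow> mat \<Rightarrow> mat" where
  "Delta_V N mu P V = (\<lambda>i j. V i j - alpha_V N mu P V * P i j - (1 - alpha_V N mu P V) * mu i)"

definition Delta_A :: "nat \<Rightarrow> nat \<Rightarrow> vec \<Rightarrow> mat \<Rightarrow> mat \<Rightarrow> mat" where
  "Delta_A N T mu Q A = (\<lambda>t j. A t j - alpha_A N T mu Q A * Q t j - (1 - alpha_A N T mu Q A) / real T)"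

text \<open>y = X A e_{x_{T+1}} (an N-vector).\<close>
definition yvec :: "nat \<Rightarrow> mat \<Rightarrow> (nat \<Rightarrow> nat) \<Rightarrow> vec" where
  "yvec T A xs = (\<lambda>n. \<Sum>t<T. (if xs t = n then A t (xs T) else 0))"

text \<open>Residual r = V X A e_{x_{T+1}} - e_{x_o}, so that l = 1/2 ||r||^2.\<close>
definition resid :: "nat \<Rightarrow> nat \<Rightarrow> mat \<Rightarrow> mat \<Rightarrow> (nat \<Rightarrow> nat) \<Rightarrow> nat \<Rightarrow> vec" where
  "resid N T V A xs xo = (\<lambda>i. (\<Sum>n<N. V i n * yvec T A xs n) - (if i = xo then 1 else 0))"

definition grad_V :: "nat \<Rightarrow> nat \<Rightarrow> mat \<Rightarrow> mat \<Rightarrow> (nat \<Rightarrow> nat) \<Rightarrow> nat \<Rightarrow> mat" where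
  "grad_V N T V A xs xo = (\<lambda>i j. resid N T V A xs xo i * yvec T A xs j)"

text \<open>Gradient of l in A (T x N): column k = x_{T+1} equals X^T V^T r, other columns 0.\<close>
definition grad_A :: "nat \<Rightarrow> nat \<Rightarrow> mat \<Rightarrow> mat \<Rightarrow> (nat \<Rightarrow> nat) \<Rightarrow> nat \<Rightarrow> mat" where
  "grad_A N T V A xs xo = (\<lambda>t j. if j = xs T then (\<Sum>i<N. V i (xs t) * resid N T V A xs xo i) else 0)"

definition pgrad_V :: "nat \<Rightarrow> nat \<Rightarrow> vec \<Rightarrow> mat \<Rightarrow> mat \<Rightarrow> (nat \<Rightarrow> nat) \<Rightarrow> nat \<Rightarrow> mat" where
  "pgrad_V N T mu V A xs xo =
     matmul N (matmul N (\<lambda>i j. (if i = j then 1 else 0) - 1 / real N) (grad_V N T V A xs xo))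
              (matmul N (\<lambda>i j. if i = j then 1 / mu i else 0)
                        (\<lambda>i j. (if i = j then 1 else 0) - mu i * mu j / vnormsq N mu))"

definition pgrad_A :: "nat \<Rightarrow> nat \<Rightarrow> vec \<Rightarrow> mat \<Rightarrow> mat \<Rightarrow> (nat \<Rightarrow> nat) \<Rightarrow> nat \<Rightarrow> mat" where
  "pgrad_A N T mu V A xs xo =
     (\<lambda>t j. (1 / mu j) * (grad_A N T V A xs xo t j - (1 / real T) * (\<Sum>s<T. grad_A N T V A xs xo s j)))"

text \<open>Probability of a sample (x_1..x_{T+1}, x_o):
 prod_t mu(x_t) * sum_t q^{(x_{T+1})}_t P_{x_o, x_t}, with q^{(k)}_t = Q t k.\<close>
definition sample_prob :: "nat \<Rightarrow> vec \<Rightarrow> mat \<Rightarrow> mat \<Rightarrow> (nat \<Rightarrow> nat) \<Rightarrow> nat \<Rightarrow> real" where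
  "sample_prob T mu P Q xs xo =
     (\<Prod>t\<le>T. mu (xs t)) * (\<Sum>t<T. Q t (xs T) * P xo (xs t))"

definition sample_seqs :: "nat \<Rightarrow> nat \<Rightarrow> (nat \<Rightarrow> nat) set" where
  "sample_seqs N T = (PiE {..T} (\<lambda>_. {..<N}))"

definition expect_mat :: "nat \<Rightarrow> nat \<Rightarrow> vec \<Rightarrow> mat \<Rightarrow> mat \<Rightarrow>
    ((nat \<Rightarrow> nat) \<Rightarrow> nat \<Rightarrow> mat) \<Rightarrow> mat" where
  "expect_mat N T mu P Q F =
     (\<lambda>i j. \<Sum>xs\<in>sample_seqs N T. \<Sum>xo<N. sample_prob T mu P Q xs xo * F xs xo i j)"

definition batch_mat :: "nat \<Rightarrow> (nat \<Rightarrow> nat \<Rightarrow> nat) \<Rightarrow> (nat \<Rightarrow> nat) \<Rightarrow>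
    ((nat \<Rightarrow> nat) \<Rightarrow> nat \<Rightarrow> mat) \<Rightarrow> mat" where
  "batch_mat B bx bo F = (\<lambda>i j. (1 / real B) * (\<Sum>b<B. F (bx b) (bo b) i j))"

end

theory Submission
  imports Defs
begin

lemma L_prod:
  fixes mu g h c :: "nat \<Rightarrow> real"
  assumes st: "s < T" "t < T" and mu1: "(\<Sum>a<N. mu a) = 1"
  shows "(\<Sum>xs\<in>sample_seqs N T. (\<Prod>i\<le>T. mu (xs i)) * (g (xs s) * h (xs t) * c (xs T)))
     = (if s = t then (\<Sum>a<N. mu a * g a * h a) else (\<Sum>a<N. mu a * g a) * (\<Sum>a<N. mu a * h a))
        * (\<Sum>a<N. mu a * c a)"
proof -
  define F where "F i a = mu a * (if i = s then g a else 1) * (if i = t then h a else 1) * (if i = T then c a else 1)" for i a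
  have 1: "(\<Prod>i\<le>T. F i (xs i)) = (\<Prod>i\<le>T. mu (xs i)) * (g (xs s) * h (xs t) * c (xs T))" for xs
  proof -
    have "(\<Prod>i\<le>T. F i (xs i)) = (\<Prod>i\<le>T. mu (xs i)) * (\<Prod>i\<le>T. if i = s then g (xs i) else 1)
        * (\<Prod>i\<le>T. if i = t then h (xs i) else 1) * (\<Prod>i\<le>T. if i = T then c (xs i) else 1)"
      unfolding F_def by (simp add: prod.distrib)
    also have "\<dots> = (\<Prod>i\<le>T. mu (xs i)) * (g (xs s) * h (xs t) * c (xs T))"
      using st by simp
    finally show ?thesis .
  qed
  have FT: "(\<Sum>a<N. F T a) = (\<Sum>a<N. mu a * c a)" using st unfolding F_def by simp
  have Fo: "(\<Sum>a<N. F i a) = 1" if "i \<noteq> s" "i \<noteq> t" "i \<noteq> T" for i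
    using that mu1 unfolding F_def by simp
  have P: "(\<Prod>i\<le>T. \<Sum>a<N. F i a) = (\<Sum>a<N. F T a) * (\<Prod>i<T. \<Sum>a<N. F i a)"
    by (simp add: lessThan_Suc_atMost[symmetric])
  have Q: "(\<Prod>i<T. \<Sum>a<N. F i a) = (if s = t then (\<Sum>a<N. mu a * g a * h a) else (\<Sum>a<N. mu a * g a) * (\<Sum>a<N. mu a * h a))"
  proof (cases "s = t")
    case True
    have "(\<Prod>i<T. \<Sum>a<N. F i a) = (\<Sum>a<N. F s a) * (\<Prod>i\<in>{..<T}-{s}. \<Sum>a<N. F i a)"
      using st by (simp add: prod.remove)
    also have "(\<Prod>i\<in>{..<T}-{s}. \<Sum>a<N. F i a) = 1"
      using True by (intro prod.neutral) (auto intro!: Fo)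
    finally show ?thesis using True st unfolding F_def by (simp add: mult.assoc)
  next
    case False
    have "(\<Prod>i<T. \<Sum>a<N. F i a) = (\<Sum>a<N. F s a) * (\<Prod>i\<in>{..<T}-{s}. \<Sum>a<N. F i a)"
      using st by (simp add: prod.remove)
    also have "(\<Prod>i\<in>{..<T}-{s}. \<Sum>a<N. F i a) = (\<Sum>a<N. F t a) * (\<Prod>i\<in>{..<T}-{s}-{t}. \<Sum>a<N. F i a)"
      using st False by (subst prod.remove[of _ t]) auto
    also have "(\<Prod>i\<in>{..<T}-{s}-{t}. \<Sum>a<N. F i a) = 1"
      by (intro prod.neutral) (auto intro!: Fo)
    finally show ?thesis using False st unfolding F_def by simp
  qed
  have "(\<Sum>xs\<in>sample_seqs N T. (\<Prod>i\<le>T. mu (xs i)) * (g (xs s) * h (xs t) * c (xs T)))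
      = (\<Sum>xs\<in>sample_seqs N T. \<Prod>i\<le>T. F i (xs i))" by (simp add: 1)
  also have "\<dots> = (\<Prod>i\<le>T. \<Sum>a<N. F i a)"
    unfolding sample_seqs_def by (rule prod_sum_PiE[symmetric]) auto
  finally show ?thesis using P Q FT by simp
qed

definition Ex :: "nat \<Rightarrow> nat \<Rightarrow> vec \<Rightarrow> mat \<Rightarrow> mat \<Rightarrow> ((nat \<Rightarrow> nat) \<Rightarrow> nat \<Rightarrow> real) \<Rightarrow> real" where
  "Ex N T mu P Q G = (\<Sum>xs\<in>sample_seqs N T. \<Sum>xo<N. sample_prob T mu P Q xs xo * G xs xo)"

lemma Ex_add: "Ex N T mu P Q (\<lambda>xs xo. F xs xo + G xs xo) = Ex N T mu P Q F + Ex N T mu P Q G"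
  unfolding Ex_def by (simp add: distrib_left sum.distrib)
lemma Ex_diff: "Ex N T mu P Q (\<lambda>xs xo. F xs xo - G xs xo) = Ex N T mu P Q F - Ex N T mu P Q G"
  unfolding Ex_def by (simp add: right_diff_distrib sum_subtractf)
lemma Ex_cmult: "Ex N T mu P Q (\<lambda>xs xo. c * F xs xo) = c * Ex N T mu P Q F"
  unfolding Ex_def by (simp add: sum_distrib_left algebra_simps)
lemma Ex_sum: "finite I \<Longrightarrow> Ex N T mu P Q (\<lambda>xs xo. \<Sum>i\<in>I. F i xs xo) = (\<Sum>i\<in>I. Ex N T mu P Q (F i))"
  unfolding Ex_def by (simp add: sum_distrib_left sum.swap[of _ I])

lemma seqs_lt: "xs \<in> sample_seqs N T \<Longrightarrow> i \<le> T \<Longrightarrow> xs i < N"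
  unfolding sample_seqs_def by auto

lemma sum_swap3:
  "(\<Sum>x\<in>A. \<Sum>y\<in>B. \<Sum>z\<in>C. F x y z) = (\<Sum>z\<in>C. \<Sum>y\<in>B. \<Sum>x\<in>A. F x y z)"
proof -
  have "(\<Sum>x\<in>A. \<Sum>y\<in>B. \<Sum>z\<in>C. F x y z) = (\<Sum>y\<in>B. \<Sum>x\<in>A. \<Sum>z\<in>C. F x y z)"
    by (rule sum.swap)
  also have "\<dots> = (\<Sum>y\<in>B. \<Sum>z\<in>C. \<Sum>x\<in>A. F x y z)"
    by (rule sum.cong[OF refl], rule sum.swap)
  also have "\<dots> = (\<Sum>z\<in>C. \<Sum>y\<in>B. \<Sum>x\<in>A. F x y z)"
    by (rule sum.swap)
  finally show ?thesis .
qed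

lemma L_E0:
  assumes P_cols: "\<forall>j<N. (\<Sum>i<N. P i j) = 1"
    and Q_cols: "\<forall>j<N. (\<Sum>t<T. Q t j) = 1"
  shows "Ex N T mu P Q (\<lambda>xs xo. H xs) = (\<Sum>xs\<in>sample_seqs N T. (\<Prod>i\<le>T. mu (xs i)) * H xs)"
  unfolding Ex_def
proof (rule sum.cong[OF refl])
  fix xs assume xs: "xs \<in> sample_seqs N T"
  have "(\<Sum>xo<N. \<Sum>t<T. Q t (xs T) * P xo (xs t)) = (\<Sum>t<T. Q t (xs T) * (\<Sum>xo<N. P xo (xs t)))"
    by (simp add: sum.swap[of _ "{..<N}"] sum_distrib_left)
  also have "\<dots> = (\<Sum>t<T. Q t (xs T))"
    using P_cols seqs_lt[OF xs] by (intro sum.cong) auto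
  also have "\<dots> = 1" using Q_cols seqs_lt[OF xs] by auto
  finally have 1: "(\<Sum>xo<N. \<Sum>t<T. Q t (xs T) * P xo (xs t)) = 1" .
  show "(\<Sum>xo<N. sample_prob T mu P Q xs xo * H xs) = (\<Prod>i\<le>T. mu (xs i)) * H xs"
    unfolding sample_prob_def using 1
    by (simp add: sum_distrib_right[symmetric] sum_distrib_left[symmetric] mult.assoc)
qed

lemma KL:
  assumes P_cols: "\<forall>j<N. (\<Sum>i<N. P i j) = 1"
    and Q_cols: "\<forall>j<N. (\<Sum>t<T. Q t j) = 1"
    and mu1: "(\<Sum>a<N. mu a) = 1" and st: "s < T" "t < T"
  shows "Ex N T mu P Q (\<lambda>xs xo. g (xs s) * h (xs t) * c (xs T))
     = (if s = t then (\<Sum>a<N. mu a * g a * h a) else (\<Sum>a<N. mu a * g a) * (\<Sum>a<N. mu a * h a))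
        * (\<Sum>a<N. mu a * c a)"
  by (simp add: L_E0[OF P_cols Q_cols] L_prod[OF st mu1])

lemma KLo:
  assumes mu1: "(\<Sum>a<N. mu a) = 1" and s: "s < T"
  shows "Ex N T mu P Q (\<lambda>xs xo. f xo (xs s) * c (xs T))
     = (\<Sum>u<T. \<Sum>xo<N. (if u = s then (\<Sum>a<N. mu a * P xo a * f xo a) else (\<Sum>a<N. mu a * P xo a) * (\<Sum>a<N. mu a * f xo a))
        * (\<Sum>a<N. mu a * (Q u a * c a)))" (is "_ = ?rhs")
proof -
  have "Ex N T mu P Q (\<lambda>xs xo. f xo (xs s) * c (xs T))
    = (\<Sum>xs\<in>sample_seqs N T. \<Sum>xo<N. \<Sum>u<T. (\<Prod>i\<le>T. mu (xs i)) * (P xo (xs u) * f xo (xs s) * (Q u (xs T) * c (xs T))))"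
    unfolding Ex_def sample_prob_def
    by (intro sum.cong refl) (simp add: sum_distrib_left sum_distrib_right algebra_simps)
  also have "\<dots> = (\<Sum>u<T. \<Sum>xo<N. \<Sum>xs\<in>sample_seqs N T. (\<Prod>i\<le>T. mu (xs i)) * (P xo (xs u) * f xo (xs s) * (Q u (xs T) * c (xs T))))"
    by (rule sum_swap3)
  also have "\<dots> = ?rhs"
    apply (intro sum.cong refl)
    subgoal for u xo using L_prod[where s=u and t=s and T=T and N=N and mu=mu and g="P xo" and h="f xo" and c="\<lambda>b. Q u b * c b"] s mu1 by simp
    done
  finally show ?thesis .
qed

lemma yvec_sum:
  assumes xs: "xs \<in> sample_seqs N T"
  shows "(\<Sum>n<N. M n * yvec T A xs n) = (\<Sum>t<T. A t (xs T) * M (xs t))"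
proof -
  have "(\<Sum>n<N. M n * yvec T A xs n) = (\<Sum>n<N. \<Sum>t<T. if xs t = n then A t (xs T) * M n else 0)"
    unfolding yvec_def by (auto simp: sum_distrib_left intro!: sum.cong)
  also have "\<dots> = (\<Sum>t<T. \<Sum>n<N. if xs t = n then A t (xs T) * M n else 0)"
    by (rule sum.swap)
  also have "\<dots> = (\<Sum>t<T. A t (xs T) * M (xs t))"
    using seqs_lt[OF xs] by (intro sum.cong refl) simp
  finally show ?thesis .
qed

lemma yvec_total:
  assumes xs: "xs \<in> sample_seqs N T" and A_cols: "\<forall>j<N. (\<Sum>t<T. A t j) = 1"
  shows "(\<Sum>n<N. yvec T A xs n) = 1"
  using yvec_sum[OF xs, of "\<lambda>_. 1" A] A_cols seqs_lt[OF xs, of T] by simp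

lemma resid_expand:
  assumes xs: "xs \<in> sample_seqs N T"
  shows "resid N T V A xs xo i = (\<Sum>t<T. A t (xs T) * V i (xs t)) - (if i = xo then 1 else 0)"
  unfolding resid_def using yvec_sum[OF xs, of "V i" A] by simp

lemma resid_total:
  assumes xs: "xs \<in> sample_seqs N T" and xo: "xo < N"
    and A_cols: "\<forall>j<N. (\<Sum>t<T. A t j) = 1" and V_cols: "\<forall>j<N. (\<Sum>i<N. V i j) = 1"
  shows "(\<Sum>i<N. resid N T V A xs xo i) = 0"
proof -
  have "(\<Sum>i<N. resid N T V A xs xo i) = (\<Sum>i<N. \<Sum>n<N. V i n * yvec T A xs n) - 1"
    unfolding resid_def using xo by (simp add: sum_subtractf)
  also have "(\<Sum>i<N. \<Sum>n<N. V i n * yvec T A xs n) = (\<Sum>n<N. (\<Sum>i<N. V i n) * yvec T A xs n)"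
    by (subst sum.swap) (simp add: sum_distrib_right)
  also have "\<dots> = (\<Sum>n<N. yvec T A xs n)" using V_cols by simp
  also have "\<dots> = 1" using yvec_total[OF xs A_cols] by simp
  finally show ?thesis by simp
qed

lemma ite0: "(if c then a else 0) * (x::real) = (if c then a * x else 0)" by simp

lemma ite10: "(if c then 1 else 0) * (x::real) = (if c then x else 0)" by simp

lemma pgV_entry:
  assumes xs: "xs \<in> sample_seqs N T" and xo: "xo < N"
    and A_cols: "\<forall>j<N. (\<Sum>t<T. A t j) = 1" and V_cols: "\<forall>j<N. (\<Sum>i<N. V i j) = 1"
    and mu_pos: "\<forall>i<N. mu i > 0" and ij: "i < N" "j < N"
  shows "pgrad_V N T mu V A xs xo i j = resid N T V A xs xo i *
           (yvec T A xs j / mu j - mu j / vnormsq N mu)"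
proof -
  let ?r = "resid N T V A xs xo" and ?y = "yvec T A xs"
  have L: "matmul N (\<lambda>i j. (if i = j then 1 else 0) - 1 / real N) (grad_V N T V A xs xo) i l = ?r i * ?y l" for l
  proof -
    have "matmul N (\<lambda>i j. (if i = j then 1 else 0) - 1 / real N) (grad_V N T V A xs xo) i l
        = (\<Sum>k<N. (if i = k then ?r k * ?y l else 0)) - (1 / real N) * (\<Sum>k<N. ?r k) * ?y l"
      unfolding matmul_def grad_V_def
      by (simp add: left_diff_distrib sum_subtractf sum_distrib_left sum_distrib_right mult.assoc ite10)
    also have "\<dots> = ?r i * ?y l" using ij resid_total[OF xs xo A_cols V_cols] by (simp add: ite10)
    finally show ?thesis .
  qed
  have R: "matmul N (\<lambda>i j. if i = j then 1 / mu i else 0)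
                        (\<lambda>i j. (if i = j then 1 else 0) - mu i * mu j / vnormsq N mu) l j
         = 1 / mu l * ((if l = j then 1 else 0) - mu l * mu j / vnormsq N mu)" if "l < N" for l
    unfolding matmul_def using that by (simp only: ite0 sum.delta finite_lessThan) simp
  have "pgrad_V N T mu V A xs xo i j = (\<Sum>l<N. ?r i * ?y l * (1 / mu l * ((if l = j then 1 else 0) - mu l * mu j / vnormsq N mu)))"
    unfolding pgrad_V_def matmul_def[of N "matmul N _ _"] using L R by (intro sum.cong refl) auto
  also have "\<dots> = (\<Sum>l<N. if l = j then ?r i * ?y l / mu l else 0) - ?r i * (mu j / vnormsq N mu) * (\<Sum>l<N. ?y l)"
  proof -
    have "?r i * ?y l * (1 / mu l * ((if l = j then 1 else 0) - mu l * mu j / vnormsq N mu))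
        = (if l = j then ?r i * ?y l / mu l else 0) - ?r i * (mu j / vnormsq N mu) * ?y l" if "l < N" for l
      using mu_pos that by (cases "l = j") (auto simp: field_simps)
    then show ?thesis by (simp add: sum_subtractf sum_distrib_left)
  qed
  also have "\<dots> = ?r i * (?y j / mu j - mu j / vnormsq N mu)"
    using ij yvec_total[OF xs A_cols] by (simp add: right_diff_distrib)
  finally show ?thesis .
qed

lemma ipV_point:
  assumes xs: "xs \<in> sample_seqs N T" and xo: "xo < N"
    and A_cols: "\<forall>j<N. (\<Sum>t<T. A t j) = 1" and V_cols: "\<forall>j<N. (\<Sum>i<N. V i j) = 1"
    and mu_pos: "\<forall>i<N. mu i > 0"
  shows "ip_mu N N mu (pgrad_V N T mu V A xs xo) P =
     (\<Sum>i<N. \<Sum>t<T. \<Sum>s<T. V i (xs t) * P i (xs s) * (A t (xs T) * A s (xs T)))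
     - (\<Sum>s<T. P xo (xs s) * A s (xs T))
     - (1 / vnormsq N mu) * ((\<Sum>i<N. \<Sum>t<T. V i (xs t) * 1 * (A t (xs T) * (\<Sum>j<N. P i j * mu j ^ 2)))
                             - (\<Sum>j<N. P xo j * mu j ^ 2))"
proof -
  let ?r = "resid N T V A xs xo" and ?y = "yvec T A xs" and ?m = "vnormsq N mu"
  let ?c = "\<lambda>i. \<Sum>j<N. P i j * mu j ^ 2"
  have "ip_mu N N mu (pgrad_V N T mu V A xs xo) P
      = (\<Sum>i<N. \<Sum>j<N. ?r i * (?y j / mu j - mu j / ?m) * mu j * P i j)"
    unfolding ip_mu_def using pgV_entry[OF xs xo A_cols V_cols mu_pos] by simp
  also have "\<dots> = (\<Sum>i<N. ?r i * (\<Sum>j<N. P i j * ?y j) - (1 / ?m) * (?r i * ?c i))"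
  proof (intro sum.cong refl)
    fix i assume "i \<in> {..<N}"
    have "?r i * (?y j / mu j - mu j / ?m) * mu j * P i j = ?r i * (P i j * ?y j) - (1 / ?m) * (?r i * (P i j * mu j ^ 2))"
      if "j < N" for j using mu_pos that by (auto simp: field_simps power2_eq_square)
    then show "(\<Sum>j<N. ?r i * (?y j / mu j - mu j / ?m) * mu j * P i j) = ?r i * (\<Sum>j<N. P i j * ?y j) - (1 / ?m) * (?r i * ?c i)"
      by (simp add: sum_subtractf sum_distrib_left)
  qed
  also have "\<dots> = (\<Sum>i<N. ?r i * (\<Sum>s<T. A s (xs T) * P i (xs s))) - (1 / ?m) * (\<Sum>i<N. ?r i * ?c i)"
    using yvec_sum[OF xs, of "P _" A] by (simp add: sum_subtractf sum_distrib_left)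
  also have "(\<Sum>i<N. ?r i * (\<Sum>s<T. A s (xs T) * P i (xs s)))
      = (\<Sum>i<N. \<Sum>t<T. \<Sum>s<T. V i (xs t) * P i (xs s) * (A t (xs T) * A s (xs T)))
        - (\<Sum>s<T. P xo (xs s) * A s (xs T))"
  proof -
    have "(\<Sum>i<N. ?r i * (\<Sum>s<T. A s (xs T) * P i (xs s)))
      = (\<Sum>i<N. (\<Sum>t<T. \<Sum>s<T. V i (xs t) * P i (xs s) * (A t (xs T) * A s (xs T)))
          - (if i = xo then (\<Sum>s<T. P xo (xs s) * A s (xs T)) else 0))"
    proof (intro sum.cong refl)
      fix i
      have e1: "(\<Sum>t<T. A t (xs T) * V i (xs t)) * (\<Sum>s<T. A s (xs T) * P i (xs s))
          = (\<Sum>t<T. \<Sum>s<T. V i (xs t) * P i (xs s) * (A t (xs T) * A s (xs T)))"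
        by (subst sum_product) (simp add: mult_ac)
      show "?r i * (\<Sum>s<T. A s (xs T) * P i (xs s)) = (\<Sum>t<T. \<Sum>s<T. V i (xs t) * P i (xs s) * (A t (xs T) * A s (xs T)))
          - (if i = xo then (\<Sum>s<T. P xo (xs s) * A s (xs T)) else 0)"
        unfolding resid_expand[OF xs] left_diff_distrib e1 by (simp add: mult_ac)
    qed
    then show ?thesis using xo by (simp add: sum_subtractf)
  qed
  also have "(\<Sum>i<N. ?r i * ?c i) = (\<Sum>i<N. \<Sum>t<T. V i (xs t) * 1 * (A t (xs T) * ?c i)) - ?c xo"
  proof -
    have "(\<Sum>i<N. ?r i * ?c i) = (\<Sum>i<N. (\<Sum>t<T. V i (xs t) * 1 * (A t (xs T) * ?c i)) - (if i = xo then ?c xo else 0))"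
      unfolding resid_expand[OF xs] left_diff_distrib sum_distrib_right[where A="{..<T}"]
      by (intro sum.cong refl) (simp add: ite10 mult_ac)
    then show ?thesis using xo by (simp add: sum_subtractf)
  qed
  finally show ?thesis .
qed

lemma w_expand:
  assumes xs: "xs \<in> sample_seqs N T" and xo: "xo < N"
  shows "(\<Sum>i<N. V i (xs t) * resid N T V A xs xo i)
       = (\<Sum>i<N. \<Sum>s<T. V i (xs t) * V i (xs s) * A s (xs T)) - V xo (xs t)"
proof -
  have "(\<Sum>i<N. V i (xs t) * resid N T V A xs xo i)
       = (\<Sum>i<N. (\<Sum>s<T. V i (xs t) * V i (xs s) * A s (xs T)) - (if i = xo then V xo (xs t) else 0))"
    unfolding resid_expand[OF xs] right_diff_distrib sum_distrib_left
    by (intro sum.cong refl) (simp add: mult_ac)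
  then show ?thesis using xo by (simp add: sum_subtractf)
qed

lemma ipA_point:
  assumes xs: "xs \<in> sample_seqs N T" and xo: "xo < N"
    and Q_cols: "\<forall>j<N. (\<Sum>t<T. Q t j) = 1"
    and mu_pos: "\<forall>i<N. mu i > 0"
  shows "ip_mu T N mu (pgrad_A N T mu V A xs xo) Q =
     (\<Sum>t<T. \<Sum>i<N. \<Sum>s<T. V i (xs t) * V i (xs s) * (Q t (xs T) * A s (xs T)))
     - (\<Sum>t<T. V xo (xs t) * Q t (xs T))
     - (1 / real T) * ((\<Sum>t<T. \<Sum>i<N. \<Sum>s<T. V i (xs t) * V i (xs s) * (1 * A s (xs T)))
                       - (\<Sum>t<T. V xo (xs t) * 1))"
proof -
  let ?k = "xs T"
  define w where "w t = (\<Sum>i<N. V i (xs t) * resid N T V A xs xo i)" for t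
  have k: "?k < N" using seqs_lt[OF xs, of T] by simp
  have g: "grad_A N T V A xs xo t j = (if j = ?k then w t else 0)" for t j
    unfolding grad_A_def w_def by simp
  have gs: "(\<Sum>s<T. grad_A N T V A xs xo s j) = (if j = ?k then (\<Sum>s<T. w s) else 0)" for j
    unfolding g by simp
  have "ip_mu T N mu (pgrad_A N T mu V A xs xo) Q
      = (\<Sum>t<T. \<Sum>j<N. if j = ?k then Q t ?k * w t - (1 / real T) * Q t ?k * (\<Sum>s<T. w s) else 0)"
    unfolding ip_mu_def pgrad_A_def
  proof (intro sum.cong refl)
    fix t j assume j: "j \<in> {..<N}"
    then have "mu j > 0" using mu_pos by simp
    then show "1 / mu j * (grad_A N T V A xs xo t j - 1 / real T * (\<Sum>s<T. grad_A N T V A xs xo s j)) * mu j * Q t j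
        = (if j = ?k then Q t ?k * w t - (1 / real T) * Q t ?k * (\<Sum>s<T. w s) else 0)"
      unfolding gs g by (auto simp: field_simps)
  qed
  also have "\<dots> = (\<Sum>t<T. Q t ?k * w t) - (1 / real T) * (\<Sum>t<T. Q t ?k) * (\<Sum>s<T. w s)"
    using k by (simp add: sum_subtractf sum_distrib_right sum_divide_distrib)
  also have "\<dots> = (\<Sum>t<T. Q t ?k * w t) - (1 / real T) * (\<Sum>s<T. w s)"
    using Q_cols k by simp
  also have "(\<Sum>t<T. Q t ?k * w t) = (\<Sum>t<T. \<Sum>i<N. \<Sum>s<T. V i (xs t) * V i (xs s) * (Q t (xs T) * A s (xs T)))
     - (\<Sum>t<T. V xo (xs t) * Q t (xs T))"
    unfolding w_def w_expand[OF xs xo] right_diff_distrib sum_subtractf sum_distrib_left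
    by (simp add: mult_ac)
  also have "(\<Sum>s<T. w s) = (\<Sum>t<T. \<Sum>i<N. \<Sum>s<T. V i (xs t) * V i (xs s) * (1 * A s (xs T))) - (\<Sum>t<T. V xo (xs t) * 1)"
    unfolding w_def w_expand[OF xs xo] sum_subtractf by simp
  finally show ?thesis .
qed

lemma Ex_cong:
  "(\<And>xs xo. xs \<in> sample_seqs N T \<Longrightarrow> xo < N \<Longrightarrow> F xs xo = G xs xo) \<Longrightarrow> Ex N T mu P Q F = Ex N T mu P Q G"
  unfolding Ex_def by (intro sum.cong refl) auto

lemma diag:
  fixes X Z :: real
  assumes "finite I"
  shows "(\<Sum>t\<in>I. \<Sum>s\<in>I. (if t = s then X else Z) * Y t s) = (X - Z) * (\<Sum>t\<in>I. Y t t) + Z * (\<Sum>t\<in>I. \<Sum>s\<in>I. Y t s)"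
proof -
  have "(\<Sum>t\<in>I. \<Sum>s\<in>I. (if t = s then X else Z) * Y t s) = (\<Sum>t\<in>I. \<Sum>s\<in>I. (if t = s then (X - Z) * Y t s else 0) + Z * Y t s)"
    by (intro sum.cong refl) (auto simp: field_simps)
  also have "\<dots> = (\<Sum>t\<in>I. (X - Z) * Y t t) + (\<Sum>t\<in>I. \<Sum>s\<in>I. Z * Y t s)"
    using assms by (simp add: sum.distrib)
  finally show ?thesis by (simp add: sum_distrib_left)
qed

lemma dsum:
  fixes mu :: "nat \<Rightarrow> real"
  shows "(\<Sum>t<T. \<Sum>s<T. \<Sum>a<N. mu a * (F t a * G s a)) = (\<Sum>a<N. mu a * (\<Sum>t<T. F t a) * (\<Sum>s<T. G s a))"
proof -
  have "(\<Sum>t<T. \<Sum>s<T. \<Sum>a<N. mu a * (F t a * G s a)) = (\<Sum>a<N. \<Sum>s<T. \<Sum>t<T. mu a * (F t a * G s a))"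
    by (rule sum_swap3)
  also have "\<dots> = (\<Sum>a<N. \<Sum>t<T. \<Sum>s<T. mu a * (F t a * G s a))"
    by (rule sum.cong[OF refl], rule sum.swap)
  also have "\<dots> = (\<Sum>a<N. mu a * (\<Sum>t<T. F t a) * (\<Sum>s<T. G s a))"
    unfolding mult.assoc unfolding sum_product unfolding sum_distrib_left by (rule refl)
  finally show ?thesis .
qed

lemma sq3:
  fixes x y z :: "nat \<Rightarrow> nat \<Rightarrow> real" and m :: "nat \<Rightarrow> real" and a :: real
  shows "(\<Sum>i\<in>I. \<Sum>j\<in>J. (x i j - a * y i j - z i j) * m j * (x i j - a * y i j - z i j))
    = (\<Sum>i\<in>I. \<Sum>j\<in>J. x i j * m j * x i j) + a^2 * (\<Sum>i\<in>I. \<Sum>j\<in>J. y i j * m j * y i j)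
      + (\<Sum>i\<in>I. \<Sum>j\<in>J. z i j * m j * z i j) - 2 * a * (\<Sum>i\<in>I. \<Sum>j\<in>J. x i j * m j * y i j)
      - 2 * (\<Sum>i\<in>I. \<Sum>j\<in>J. x i j * m j * z i j) + 2 * a * (\<Sum>i\<in>I. \<Sum>j\<in>J. y i j * m j * z i j)"
proof -
  have "(x i j - a * y i j - z i j) * m j * (x i j - a * y i j - z i j)
     = x i j * m j * x i j + a^2 * (y i j * m j * y i j) + z i j * m j * z i j - 2 * a * (x i j * m j * y i j)
       - 2 * (x i j * m j * z i j) + 2 * a * (y i j * m j * z i j)" for i j
    by (simp add: algebra_simps power2_eq_square)
  then show ?thesis by (simp add: sum.distrib sum_subtractf sum_distrib_left)
qed

lemma alg1:
  fixes aV aA KP KQ t mm vp aq nA nQ eta ih :: real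
  assumes KP: "KP \<noteq> 0" and KQ: "KQ \<noteq> 0" and t: "t \<noteq> 0"
    and hV: "aV = (vp - mm) / KP" and hA: "aA = (aq - 1 / t) / KQ" and hQ: "KQ = nQ - 1 / t"
  shows "(vp - eta * ((vp - mm) * nA - aq * KP) - eta * ih - mm) / KP
    = aV + eta * KQ * (1 - aA * aV) * aA + eta * (1 - aV) / t
      - eta * aV * (nA + aA^2 * nQ + t * ((1 - aA) / t) * ((1 - aA) / t) - 2 * aA * aq - 2 * ((1 - aA) / t) + 2 * aA * ((1 - aA) / t))
      - eta / KP * ih"
proof -
  have vp: "vp = aV * KP + mm" using hV KP by (simp add: field_simps)
  have aq: "aq = aA * KQ + 1 / t" using hA KQ by (simp add: field_simps)
  have nQ: "nQ = KQ + 1 / t" using hQ by simp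
  have nD: "nA + aA^2 * nQ + t * ((1 - aA) / t) * ((1 - aA) / t) - 2 * aA * aq - 2 * ((1 - aA) / t) + 2 * aA * ((1 - aA) / t)
      = nA - aA^2 * KQ - 1 / t"
    unfolding aq nQ using t by (simp add: field_simps power2_eq_square)
  show ?thesis unfolding nD unfolding vp aq using KP t by (simp add: field_simps power2_eq_square)
qed

lemma alg2:
  fixes aV aA KP KQ t mm vp aq nV nP nQ eta ih :: real
  assumes KP: "KP \<noteq> 0" and KQ: "KQ \<noteq> 0" and t: "t \<noteq> 0"
    and hV: "aV = (vp - mm) / KP" and hA: "aA = (aq - 1 / t) / KQ" and hQ: "KQ = nQ - 1 / t" and hP: "KP = nP - mm"
  shows "(aq - eta * (aq * (nV - mm) - (vp - mm) * nQ - 1 / t * (nV - vp)) - eta * ih - 1 / t) / KQ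
    = aA + eta * KP * (1 - aV * aA) * aV
      - eta * aA * (nV + aV^2 * nP + (1 - aV)^2 * mm - 2 * aV * vp - 2 * ((1 - aV) * mm) + 2 * aV * ((1 - aV) * mm))
      - eta / KQ * ih"
proof -
  have vp: "vp = aV * KP + mm" using hV KP by (simp add: field_simps)
  have aq: "aq = aA * KQ + 1 / t" using hA KQ by (simp add: field_simps)
  have nQ: "nQ = KQ + 1 / t" using hQ by simp
  have nP: "nP = KP + mm" using hP by simp
  have nD: "nV + aV^2 * nP + (1 - aV)^2 * mm - 2 * aV * vp - 2 * ((1 - aV) * mm) + 2 * aV * ((1 - aV) * mm)
      = nV - aV^2 * KP - mm"
    unfolding vp nP by (simp add: algebra_simps power2_eq_square)
  show ?thesis unfolding nD unfolding vp aq nQ using KQ t by (simp add: field_simps power2_eq_square)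
qed


lemma lin: fixes n :: real shows "(\<Sum>i\<in>I. (c i - d i) * n + d i) = (sum c I - sum d I) * n + sum d I"
proof -
  have "(\<Sum>i\<in>I. (c i - d i) * n) = (sum c I - sum d I) * n"
    by (simp add: sum_subtractf flip: sum_distrib_right)
  then show ?thesis by (simp add: sum.distrib)
qed

context
  fixes N T :: nat and mu :: vec and P Q V A :: mat
  assumes mu_pos: "\<forall>i<N. mu i > 0"
    and mu_sum: "(\<Sum>i<N. mu i) = 1"
    and P_cols: "\<forall>j<N. (\<Sum>i<N. P i j) = 1"
    and P_mu: "\<forall>i<N. (\<Sum>j<N. P i j * mu j) = mu i"
    and Q_cols: "\<forall>j<N. (\<Sum>t<T. Q t j) = 1"
    and V_cols: "\<forall>j<N. (\<Sum>i<N. V i j) = 1"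
    and A_cols: "\<forall>j<N. (\<Sum>t<T. A t j) = 1"
    and V_mu: "\<forall>i<N. (\<Sum>j<N. V i j * mu j) = mu i"
    and Tpos: "0 < T"
begin

lemma Vmu': "i < N \<Longrightarrow> (\<Sum>a<N. mu a * V i a) = mu i"
  using V_mu by (simp add: mult.commute)
lemma Pmu': "i < N \<Longrightarrow> (\<Sum>a<N. mu a * P i a) = mu i"
  using P_mu by (simp add: mult.commute)

lemma T1:
  "Ex N T mu P Q (\<lambda>xs xo. \<Sum>i<N. \<Sum>t<T. \<Sum>s<T. V i (xs t) * P i (xs s) * (A t (xs T) * A s (xs T)))
   = (ip_mu N N mu V P - vnormsq N mu) * normsq_mu T N mu A + vnormsq N mu"
proof -
  have "Ex N T mu P Q (\<lambda>xs xo. \<Sum>i<N. \<Sum>t<T. \<Sum>s<T. V i (xs t) * P i (xs s) * (A t (xs T) * A s (xs T)))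
    = (\<Sum>i<N. \<Sum>t<T. \<Sum>s<T. (if t = s then (\<Sum>a<N. mu a * V i a * P i a) else mu i * mu i) * (\<Sum>a<N. mu a * (A t a * A s a)))"
    apply (simp only: Ex_sum finite_lessThan)
    apply (intro sum.cong refl)
    subgoal for i t s
      using KL[OF P_cols Q_cols mu_sum, where s=t and t=s and g="V i" and h="P i" and c="\<lambda>b. A t b * A s b"]
        Vmu'[of i] Pmu'[of i] by simp
    done
  also have "\<dots> = (\<Sum>i<N. ((\<Sum>a<N. mu a * V i a * P i a) - mu i * mu i) * normsq_mu T N mu A + mu i * mu i)"
  proof (intro sum.cong refl)
    fix i
    have d: "(\<Sum>t<T. \<Sum>s<T. \<Sum>a<N. mu a * (A t a * A s a)) = 1"
      unfolding dsum using A_cols mu_sum by simp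
    show "(\<Sum>t<T. \<Sum>s<T. (if t = s then (\<Sum>a<N. mu a * V i a * P i a) else mu i * mu i) * (\<Sum>a<N. mu a * (A t a * A s a)))
      = ((\<Sum>a<N. mu a * V i a * P i a) - mu i * mu i) * normsq_mu T N mu A + mu i * mu i"
      unfolding diag[OF finite_lessThan] d normsq_mu_def ip_mu_def by (simp add: mult_ac)
  qed
  also have "\<dots> = (ip_mu N N mu V P - vnormsq N mu) * normsq_mu T N mu A + vnormsq N mu"
    unfolding lin unfolding ip_mu_def vnormsq_def
    by (simp add: power2_eq_square mult_ac)
  finally show ?thesis .
qed


lemma Ex_const: "Ex N T mu P Q (\<lambda>xs xo. d xo) = (\<Sum>xo<N. mu xo * d xo)"
proof -
  have k: "Ex N T mu P Q (\<lambda>xs xo. d xo) = (\<Sum>u<T. \<Sum>p<N. (if u = 0 then (\<Sum>a<N. mu a * P p a * d p) else (\<Sum>a<N. mu a * P p a) * (\<Sum>a<N. mu a * d p))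
        * (\<Sum>a<N. mu a * (Q u a * 1)))"
    using KLo[OF mu_sum Tpos, where f="\<lambda>p a. d p" and c="\<lambda>_. 1"] by simp
  have "Ex N T mu P Q (\<lambda>xs xo. d xo) = (\<Sum>u<T. \<Sum>p<N. (mu p * d p) * (\<Sum>a<N. mu a * Q u a))"
    unfolding k
    apply (intro sum.cong refl)
    subgoal for u p
    proof -
      assume "u \<in> {..<T}" "p \<in> {..<N}"
      then have a: "(\<Sum>a<N. mu a * P p a * d p) = mu p * d p"
        using Pmu'[of p] by (simp flip: sum_distrib_right)
      have b: "(\<Sum>a<N. mu a * d p) = d p" using mu_sum by (simp flip: sum_distrib_right)
      show ?thesis using Pmu'[of p] \<open>p \<in> {..<N}\<close> unfolding a b by simp
    qed
    done
  also have "\<dots> = (\<Sum>p<N. mu p * d p) * (\<Sum>u<T. \<Sum>a<N. mu a * Q u a)"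
    by (simp only: sum_distrib_right[symmetric] sum_distrib_left[symmetric])
  also have "(\<Sum>u<T. \<Sum>a<N. mu a * Q u a) = (\<Sum>a<N. mu a * (\<Sum>u<T. Q u a))"
    by (subst sum.swap) (simp add: sum_distrib_left)
  also have "\<dots> = 1" using Q_cols mu_sum by simp
  finally show ?thesis by simp
qed

lemma T3:
  "Ex N T mu P Q (\<lambda>xs xo. \<Sum>i<N. \<Sum>t<T. V i (xs t) * 1 * (A t (xs T) * c i)) = (\<Sum>i<N. mu i * c i)"
proof -
  have "Ex N T mu P Q (\<lambda>xs xo. \<Sum>i<N. \<Sum>t<T. V i (xs t) * 1 * (A t (xs T) * c i))
      = (\<Sum>i<N. \<Sum>t<T. mu i * c i * (\<Sum>a<N. mu a * A t a))"
    apply (simp only: Ex_sum finite_lessThan)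
    apply (intro sum.cong refl)
    subgoal for i t
      using KL[OF P_cols Q_cols mu_sum, where s=t and t=t and g="V i" and h="\<lambda>_. 1" and c="\<lambda>b. A t b * c i"]
        Vmu'[of i] by (simp add: sum_distrib_left mult_ac)
    done
  also have "\<dots> = (\<Sum>i<N. mu i * c i * (\<Sum>a<N. mu a * (\<Sum>t<T. A t a)))"
    by (simp add: sum_distrib_left sum.swap[of _ "{..<T}"])
  also have "(\<Sum>a<N. mu a * (\<Sum>t<T. A t a)) = 1" using A_cols mu_sum by simp
  finally show ?thesis by simp
qed

lemma E2g:
  assumes M_mu: "\<forall>p<N. (\<Sum>a<N. mu a * M p a) = mu p"
  shows "Ex N T mu P Q (\<lambda>xs xo. \<Sum>t<T. M xo (xs t) * Z t (xs T))
    = (ip_mu N N mu M P - vnormsq N mu) * (\<Sum>u<T. \<Sum>a<N. mu a * (Q u a * Z u a))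
      + vnormsq N mu * (\<Sum>u<T. \<Sum>t<T. \<Sum>a<N. mu a * (Q u a * Z t a))"
proof -
  have "Ex N T mu P Q (\<lambda>xs xo. \<Sum>t<T. M xo (xs t) * Z t (xs T))
    = (\<Sum>t<T. \<Sum>u<T. \<Sum>p<N. (if u = t then (\<Sum>a<N. mu a * P p a * M p a) else mu p * mu p) * (\<Sum>a<N. mu a * (Q u a * Z t a)))"
    apply (simp only: Ex_sum finite_lessThan)
    apply (intro sum.cong refl)
    subgoal for t
      apply (subst KLo[OF mu_sum, where s=t and f=M and c="Z t"])
       apply simp
      apply (intro sum.cong refl)
      using Pmu' M_mu by simp
    done
  also have "\<dots> = (\<Sum>p<N. \<Sum>u<T. \<Sum>t<T. (if u = t then (\<Sum>a<N. mu a * P p a * M p a) else mu p * mu p) * (\<Sum>a<N. mu a * (Q u a * Z t a)))"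
    by (rule sum_swap3)
  also have "\<dots> = (\<Sum>p<N. ((\<Sum>a<N. mu a * P p a * M p a) - mu p * mu p) * (\<Sum>u<T. \<Sum>a<N. mu a * (Q u a * Z u a))
      + mu p * mu p * (\<Sum>u<T. \<Sum>t<T. \<Sum>a<N. mu a * (Q u a * Z t a)))"
    by (simp only: diag[OF finite_lessThan])
  also have "\<dots> = (ip_mu N N mu M P - vnormsq N mu) * (\<Sum>u<T. \<Sum>a<N. mu a * (Q u a * Z u a))
      + vnormsq N mu * (\<Sum>u<T. \<Sum>t<T. \<Sum>a<N. mu a * (Q u a * Z t a))"
    unfolding sum.distrib sum_distrib_right[symmetric] sum_subtractf ip_mu_def vnormsq_def
    by (simp add: power2_eq_square mult_ac)
  finally show ?thesis .
qed

lemma E13: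
  "Ex N T mu P Q (\<lambda>xs xo. \<Sum>t<T. \<Sum>i<N. \<Sum>s<T. V i (xs t) * V i (xs s) * (Z t (xs T) * A s (xs T)))
   = (normsq_mu N N mu V - vnormsq N mu) * (\<Sum>t<T. \<Sum>a<N. mu a * (Z t a * A t a))
     + vnormsq N mu * (\<Sum>t<T. \<Sum>s<T. \<Sum>a<N. mu a * (Z t a * A s a))"
proof -
  have "Ex N T mu P Q (\<lambda>xs xo. \<Sum>t<T. \<Sum>i<N. \<Sum>s<T. V i (xs t) * V i (xs s) * (Z t (xs T) * A s (xs T)))
    = (\<Sum>t<T. \<Sum>i<N. \<Sum>s<T. (if t = s then (\<Sum>a<N. mu a * V i a * V i a) else mu i * mu i) * (\<Sum>a<N. mu a * (Z t a * A s a)))"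
    apply (simp only: Ex_sum finite_lessThan)
    apply (intro sum.cong refl)
    subgoal for t i s
      using KL[OF P_cols Q_cols mu_sum, where s=t and t=s and g="V i" and h="V i" and c="\<lambda>b. Z t b * A s b"]
        Vmu'[of i] by simp
    done
  also have "\<dots> = (\<Sum>i<N. \<Sum>t<T. \<Sum>s<T. (if t = s then (\<Sum>a<N. mu a * V i a * V i a) else mu i * mu i) * (\<Sum>a<N. mu a * (Z t a * A s a)))"
    by (rule sum.swap)
  also have "\<dots> = (\<Sum>i<N. ((\<Sum>a<N. mu a * V i a * V i a) - mu i * mu i) * (\<Sum>t<T. \<Sum>a<N. mu a * (Z t a * A t a))
      + mu i * mu i * (\<Sum>t<T. \<Sum>s<T. \<Sum>a<N. mu a * (Z t a * A s a)))"
    by (simp only: diag[OF finite_lessThan])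
  also have "\<dots> = (normsq_mu N N mu V - vnormsq N mu) * (\<Sum>t<T. \<Sum>a<N. mu a * (Z t a * A t a))
     + vnormsq N mu * (\<Sum>t<T. \<Sum>s<T. \<Sum>a<N. mu a * (Z t a * A s a))"
    unfolding sum.distrib sum_distrib_right[symmetric] sum_subtractf normsq_mu_def ip_mu_def vnormsq_def
    by (simp add: power2_eq_square mult_ac)
  finally show ?thesis .
qed


lemma Vmu_all: "\<forall>p<N. (\<Sum>a<N. mu a * V p a) = mu p" using Vmu' by simp
lemma Pmu_all: "\<forall>p<N. (\<Sum>a<N. mu a * P p a) = mu p" using Pmu' by simp

lemma sumA1: "(\<Sum>t<T. \<Sum>a<N. mu a * (1 * A t a)) = 1"
proof -
  have "(\<Sum>t<T. \<Sum>a<N. mu a * (1 * A t a)) = (\<Sum>a<N. mu a * (\<Sum>t<T. A t a))"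
    by (subst sum.swap) (simp add: sum_distrib_left)
  also have "\<dots> = 1" using A_cols mu_sum by simp
  finally show ?thesis .
qed

lemma sumQ1: "(\<Sum>t<T. \<Sum>a<N. mu a * (Q t a * 1)) = 1"
proof -
  have "(\<Sum>t<T. \<Sum>a<N. mu a * (Q t a * 1)) = (\<Sum>a<N. mu a * (\<Sum>t<T. Q t a))"
    by (subst sum.swap) (simp add: sum_distrib_left)
  also have "\<dots> = 1" using Q_cols mu_sum by simp
  finally show ?thesis .
qed

lemma dsumQA: "(\<Sum>t<T. \<Sum>s<T. \<Sum>a<N. mu a * (Q t a * A s a)) = 1"
  unfolding dsum using A_cols Q_cols mu_sum by simp
lemma dsumQQ: "(\<Sum>t<T. \<Sum>s<T. \<Sum>a<N. mu a * (Q t a * Q s a)) = 1"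
  unfolding dsum using Q_cols mu_sum by simp
lemma dsum1A: "(\<Sum>t<T. \<Sum>s<T. \<Sum>a<N. mu a * (1 * A s a)) = real T"
  unfolding dsum using A_cols mu_sum by (simp flip: sum_distrib_right)
lemma dsumQ1: "(\<Sum>t<T. \<Sum>s<T. \<Sum>a<N. mu a * (Q t a * 1)) = real T"
  unfolding dsum using Q_cols mu_sum by (simp flip: sum_distrib_right)

lemma EV:
  "Ex N T mu P Q (\<lambda>xs xo. ip_mu N N mu (pgrad_V N T mu V A xs xo) P)
   = (ip_mu N N mu V P - vnormsq N mu) * normsq_mu T N mu A
     - ip_mu T N mu A Q * (normsq_mu N N mu P - vnormsq N mu)"
proof -
  let ?c = "\<lambda>i. \<Sum>j<N. P i j * mu j ^ 2"
  have "Ex N T mu P Q (\<lambda>xs xo. ip_mu N N mu (pgrad_V N T mu V A xs xo) P)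
    = Ex N T mu P Q (\<lambda>xs xo. (\<Sum>i<N. \<Sum>t<T. \<Sum>s<T. V i (xs t) * P i (xs s) * (A t (xs T) * A s (xs T)))
     - (\<Sum>s<T. P xo (xs s) * A s (xs T))
     - (1 / vnormsq N mu) * ((\<Sum>i<N. \<Sum>t<T. V i (xs t) * 1 * (A t (xs T) * ?c i)) - ?c xo))"
    by (rule Ex_cong) (rule ipV_point[OF _ _ A_cols V_cols mu_pos])
  also have "\<dots> = Ex N T mu P Q (\<lambda>xs xo. \<Sum>i<N. \<Sum>t<T. \<Sum>s<T. V i (xs t) * P i (xs s) * (A t (xs T) * A s (xs T)))
     - Ex N T mu P Q (\<lambda>xs xo. \<Sum>s<T. P xo (xs s) * A s (xs T))
     - (1 / vnormsq N mu) * (Ex N T mu P Q (\<lambda>xs xo. \<Sum>i<N. \<Sum>t<T. V i (xs t) * 1 * (A t (xs T) * ?c i))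
         - Ex N T mu P Q (\<lambda>xs xo. ?c xo))"
    by (simp only: Ex_diff Ex_cmult)
  also have "\<dots> = (ip_mu N N mu V P - vnormsq N mu) * normsq_mu T N mu A + vnormsq N mu
     - ((normsq_mu N N mu P - vnormsq N mu) * ip_mu T N mu A Q + vnormsq N mu)"
    unfolding T1 T3 Ex_const E2g[OF Pmu_all, where Z=A] dsumQA
    unfolding normsq_mu_def ip_mu_def by (simp add: mult_ac)
  finally show ?thesis by (simp add: algebra_simps)
qed

lemma EA:
  "Ex N T mu P Q (\<lambda>xs xo. ip_mu T N mu (pgrad_A N T mu V A xs xo) Q)
   = ip_mu T N mu A Q * (normsq_mu N N mu V - vnormsq N mu)
     - (ip_mu N N mu V P - vnormsq N mu) * normsq_mu T N mu Q
     - (1 / real T) * (normsq_mu N N mu V - ip_mu N N mu V P)"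
proof -
  have "Ex N T mu P Q (\<lambda>xs xo. ip_mu T N mu (pgrad_A N T mu V A xs xo) Q)
    = Ex N T mu P Q (\<lambda>xs xo. (\<Sum>t<T. \<Sum>i<N. \<Sum>s<T. V i (xs t) * V i (xs s) * (Q t (xs T) * A s (xs T)))
     - (\<Sum>t<T. V xo (xs t) * Q t (xs T))
     - (1 / real T) * ((\<Sum>t<T. \<Sum>i<N. \<Sum>s<T. V i (xs t) * V i (xs s) * (1 * A s (xs T)))
                       - (\<Sum>t<T. V xo (xs t) * 1)))"
    by (rule Ex_cong) (rule ipA_point[OF _ _ Q_cols mu_pos])
  also have "\<dots> = Ex N T mu P Q (\<lambda>xs xo. \<Sum>t<T. \<Sum>i<N. \<Sum>s<T. V i (xs t) * V i (xs s) * (Q t (xs T) * A s (xs T)))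
     - Ex N T mu P Q (\<lambda>xs xo. \<Sum>t<T. V xo (xs t) * Q t (xs T))
     - (1 / real T) * (Ex N T mu P Q (\<lambda>xs xo. \<Sum>t<T. \<Sum>i<N. \<Sum>s<T. V i (xs t) * V i (xs s) * (1 * A s (xs T)))
                       - Ex N T mu P Q (\<lambda>xs xo. \<Sum>t<T. V xo (xs t) * 1))"
    by (simp only: Ex_diff Ex_cmult)
  also have "\<dots> = ((normsq_mu N N mu V - vnormsq N mu) * ip_mu T N mu A Q + vnormsq N mu)
     - ((ip_mu N N mu V P - vnormsq N mu) * normsq_mu T N mu Q + vnormsq N mu)
     - (1 / real T) * (((normsq_mu N N mu V - vnormsq N mu) + vnormsq N mu * real T)
                       - ((ip_mu N N mu V P - vnormsq N mu) + vnormsq N mu * real T))"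
    unfolding E13[where Z=Q] E13[where Z="\<lambda>_ _. 1"] E2g[OF Vmu_all, where Z=Q]
      E2g[OF Vmu_all, where Z="\<lambda>_ _. 1"] dsumQA dsumQQ dsum1A dsumQ1 sumA1 sumQ1
    unfolding normsq_mu_def ip_mu_def by (simp add: mult_ac)
  finally show ?thesis by (simp add: algebra_simps)
qed


lemma nDA:
  "normsq_mu T N mu (\<lambda>t j. A t j - a * Q t j - (1 - a) / real T)
   = normsq_mu T N mu A + a^2 * normsq_mu T N mu Q + real T * ((1 - a) / real T) * ((1 - a) / real T)
     - 2 * a * ip_mu T N mu A Q - 2 * ((1 - a) / real T) + 2 * a * ((1 - a) / real T)"
proof -
  let ?c = "(1 - a) / real T"
  have c0: "(\<Sum>j<N. c * mu j * c) = c * c" for c :: real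
  proof -
    have "(\<Sum>j<N. c * mu j * c) = c * (\<Sum>j<N. mu j) * c" by (simp add: sum_distrib_left sum_distrib_right)
    then show ?thesis using mu_sum by simp
  qed
  have c1: "(\<Sum>t<T. \<Sum>j<N. ?c * mu j * ?c) = real T * ?c * ?c"
    unfolding c0 by simp
  have c2: "(\<Sum>t<T. \<Sum>j<N. M t j * mu j * c) = c" if M: "\<forall>j<N. (\<Sum>t<T. M t j) = 1" for M and c :: real
  proof -
    have "(\<Sum>t<T. \<Sum>j<N. M t j * mu j * c) = (\<Sum>j<N. (\<Sum>t<T. M t j) * mu j * c)"
      by (subst sum.swap) (simp add: sum_distrib_right)
    also have "\<dots> = (\<Sum>j<N. mu j) * c" using M by (simp add: sum_distrib_right)
    also have "\<dots> = c" using mu_sum by simp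
    finally show ?thesis .
  qed
  show ?thesis
    unfolding normsq_mu_def ip_mu_def
    unfolding sq3[where x=A and a=a and y=Q and z="\<lambda>t j. ?c" and m=mu and I="{..<T}" and J="{..<N}"] c1 c2[OF A_cols] c2[OF Q_cols]
    by simp
qed

lemma nDV:
  "normsq_mu N N mu (\<lambda>i j. V i j - a * P i j - (1 - a) * mu i)
   = normsq_mu N N mu V + a^2 * normsq_mu N N mu P + (1 - a)^2 * vnormsq N mu
     - 2 * a * ip_mu N N mu V P - 2 * ((1 - a) * vnormsq N mu) + 2 * a * ((1 - a) * vnormsq N mu)"
proof -
  let ?b = "1 - a"
  have c1: "(\<Sum>i<N. \<Sum>j<N. ?b * mu i * mu j * (?b * mu i)) = ?b^2 * vnormsq N mu"
  proof -
    have "(\<Sum>i<N. \<Sum>j<N. ?b * mu i * mu j * (?b * mu i)) = (\<Sum>i<N. ?b^2 * mu i^2 * (\<Sum>j<N. mu j))"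
      by (simp add: sum_distrib_left power2_eq_square mult_ac)
    then show ?thesis using mu_sum unfolding vnormsq_def by (simp add: sum_distrib_left)
  qed
  have c2: "(\<Sum>i<N. \<Sum>j<N. M i j * mu j * (?b * mu i)) = ?b * vnormsq N mu"
    if M: "\<forall>i<N. (\<Sum>j<N. M i j * mu j) = mu i" for M
  proof -
    have "(\<Sum>i<N. \<Sum>j<N. M i j * mu j * (?b * mu i)) = (\<Sum>i<N. ?b * mu i * (\<Sum>j<N. M i j * mu j))"
      by (simp add: sum_distrib_left mult_ac)
    also have "\<dots> = (\<Sum>i<N. ?b * mu i * mu i)" using M by simp
    finally show ?thesis unfolding vnormsq_def by (simp add: sum_distrib_left power2_eq_square mult_ac)
  qed
  show ?thesis
    unfolding normsq_mu_def ip_mu_def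
    unfolding sq3[where x=V and a=a and y=P and z="\<lambda>i j. ?b * mu i" and m=mu and I="{..<N}" and J="{..<N}"] c2[OF V_mu] c2[OF P_mu]
    using c1 by (simp add: mult_ac)
qed

end


lemma sum_swap4:
  "(\<Sum>a\<in>A. \<Sum>b\<in>B. \<Sum>c\<in>C. \<Sum>d\<in>D. f a b c d) = (\<Sum>c\<in>C. \<Sum>d\<in>D. \<Sum>a\<in>A. \<Sum>b\<in>B. f a b c d)"
proof -
  have "(\<Sum>a\<in>A. \<Sum>b\<in>B. \<Sum>c\<in>C. \<Sum>d\<in>D. f a b c d) = (\<Sum>a\<in>A. \<Sum>c\<in>C. \<Sum>b\<in>B. \<Sum>d\<in>D. f a b c d)"
    by (rule sum.cong[OF refl], rule sum.swap)
  also have "\<dots> = (\<Sum>a\<in>A. \<Sum>c\<in>C. \<Sum>d\<in>D. \<Sum>b\<in>B. f a b c d)"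
    by (rule sum.cong[OF refl], rule sum.cong[OF refl], rule sum.swap)
  also have "\<dots> = (\<Sum>c\<in>C. \<Sum>a\<in>A. \<Sum>d\<in>D. \<Sum>b\<in>B. f a b c d)"
    by (rule sum.swap)
  also have "\<dots> = (\<Sum>c\<in>C. \<Sum>d\<in>D. \<Sum>a\<in>A. \<Sum>b\<in>B. f a b c d)"
    by (rule sum.cong[OF refl], rule sum.swap)
  finally show ?thesis .
qed

lemma ip_expect:
  "ip_mu m N mu (expect_mat N T mu P Q F) M = Ex N T mu P Q (\<lambda>xs xo. ip_mu m N mu (F xs xo) M)"
proof -
  have "ip_mu m N mu (expect_mat N T mu P Q F) M
     = (\<Sum>i<m. \<Sum>j<N. \<Sum>xs\<in>sample_seqs N T. \<Sum>xo<N. sample_prob T mu P Q xs xo * (F xs xo i j * mu j * M i j))"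
    unfolding ip_mu_def expect_mat_def by (simp add: sum_distrib_left sum_distrib_right mult_ac)
  also have "\<dots> = (\<Sum>xs\<in>sample_seqs N T. \<Sum>xo<N. \<Sum>i<m. \<Sum>j<N. sample_prob T mu P Q xs xo * (F xs xo i j * mu j * M i j))"
    by (rule sum_swap4)
  also have "\<dots> = Ex N T mu P Q (\<lambda>xs xo. ip_mu m N mu (F xs xo) M)"
    unfolding Ex_def ip_mu_def by (simp add: sum_distrib_left)
  finally show ?thesis .
qed

lemma ip_lin:
  "ip_mu m N mu (\<lambda>i j. X i j - e * Y i j - e * Z i j) M = ip_mu m N mu X M - e * ip_mu m N mu Y M - e * ip_mu m N mu Z M"
proof -
  have "(X i j - e * Y i j - e * Z i j) * mu j * M i j = X i j * mu j * M i j - e * (Y i j * mu j * M i j) - e * (Z i j * mu j * M i j)" for i j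
    by (simp add: algebra_simps)
  then show ?thesis unfolding ip_mu_def by (simp add: sum_subtractf sum_distrib_left)
qed

theorem lemmaC5:
  fixes N T B :: nat
    and mu :: vec and P Q V A :: mat
    and eta_V eta_A :: real
    and bx :: "nat \<Rightarrow> nat \<Rightarrow> nat" and bo :: "nat \<Rightarrow> nat"
    and EgV EgA hV hA V' A' :: mat
  assumes mu_pos: "\<forall>i<N. mu i > 0"
    and mu_sum: "(\<Sum>i<N. mu i) = 1"
    and P_nonneg: "\<forall>i<N. \<forall>j<N. P i j \<ge> 0"
    and P_cols: "\<forall>j<N. (\<Sum>i<N. P i j) = 1"
    and P_mu: "\<forall>i<N. (\<Sum>j<N. P i j * mu j) = mu i"
    and Q_nonneg: "\<forall>t<T. \<forall>j<N. Q t j \<ge> 0"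
    and Q_cols: "\<forall>j<N. (\<Sum>t<T. Q t j) = 1"
    and KP_pos: "K_P N mu P > 0"
    and KQ_pos: "K_Q N T mu Q > 0"
    and V_cols: "\<forall>j<N. (\<Sum>i<N. V i j) = 1"
    and A_cols: "\<forall>j<N. (\<Sum>t<T. A t j) = 1"
    and V_mu: "\<forall>i<N. (\<Sum>j<N. V i j * mu j) = mu i"
    and eta_V_pos: "eta_V > 0" and eta_A_pos: "eta_A > 0"
    and B_pos: "B > 0"
    and batch: "\<forall>b<B. bx b \<in> sample_seqs N T \<and> bo b < N"
    and EgV_def: "EgV = expect_mat N T mu P Q (pgrad_V N T mu V A)"
    and EgA_def: "EgA = expect_mat N T mu P Q (pgrad_A N T mu V A)"
    and hV_def: "hV = (\<lambda>i j. batch_mat B bx bo (pgrad_V N T mu V A) i j - EgV i j)"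
    and hA_def: "hA = (\<lambda>i j. batch_mat B bx bo (pgrad_A N T mu V A) i j - EgA i j)"
    and V'_def: "V' = (\<lambda>i j. V i j - eta_V * EgV i j - eta_V * hV i j)"
    and A'_def: "A' = (\<lambda>t j. A t j - eta_A * EgA t j - eta_A * hA t j)"
  shows "(alpha_V N mu P V' =
           alpha_V N mu P V
           + eta_V * K_Q N T mu Q * (1 - alpha_A N T mu Q A * alpha_V N mu P V) * alpha_A N T mu Q A
           + eta_V * (1 - alpha_V N mu P V) / real T
           - eta_V * alpha_V N mu P V * normsq_mu T N mu (Delta_A N T mu Q A)
           - (eta_V / K_P N mu P) * ip_mu N N mu hV P) \<and>
         (alpha_A N T mu Q A' =
           alpha_A N T mu Q A
           + eta_A * K_P N mu P * (1 - alpha_V N mu P V * alpha_A N T mu Q A) * alpha_V N mu P V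
           - eta_A * alpha_A N T mu Q A * normsq_mu N N mu (Delta_V N mu P V)
           - (eta_A / K_Q N T mu Q) * ip_mu T N mu hA Q)"
  proof -
  have Tpos: "0 < T"
  proof (rule ccontr)
    assume "\<not> 0 < T"
    then have "T = 0" by simp
    then have "K_Q N T mu Q = 0" unfolding K_Q_def normsq_mu_def ip_mu_def by simp
    then show False using KQ_pos by simp
  qed
  note ctx = mu_pos mu_sum P_cols P_mu Q_cols V_cols A_cols V_mu Tpos
  have KP: "K_P N mu P \<noteq> 0" and KQ: "K_Q N T mu Q \<noteq> 0" and Tn: "real T \<noteq> 0"
    using KP_pos KQ_pos Tpos by auto
  have ipV': "ip_mu N N mu V' P = ip_mu N N mu V P - eta_V * ip_mu N N mu EgV P - eta_V * ip_mu N N mu hV P"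
    unfolding V'_def by (rule ip_lin)
  have ipEgV: "ip_mu N N mu EgV P = (ip_mu N N mu V P - vnormsq N mu) * normsq_mu T N mu A - ip_mu T N mu A Q * K_P N mu P"
    unfolding EgV_def ip_expect EV[OF ctx] K_P_def ..
  have ipA': "ip_mu T N mu A' Q = ip_mu T N mu A Q - eta_A * ip_mu T N mu EgA Q - eta_A * ip_mu T N mu hA Q"
    unfolding A'_def by (rule ip_lin)
  have ipEgA: "ip_mu T N mu EgA Q = ip_mu T N mu A Q * (normsq_mu N N mu V - vnormsq N mu)
     - (ip_mu N N mu V P - vnormsq N mu) * normsq_mu T N mu Q
     - (1 / real T) * (normsq_mu N N mu V - ip_mu N N mu V P)"
    unfolding EgA_def ip_expect EA[OF ctx] ..
  have c1: "alpha_V N mu P V' = (ip_mu N N mu V P - eta_V * ((ip_mu N N mu V P - vnormsq N mu) * normsq_mu T N mu A - ip_mu T N mu A Q * K_P N mu P) - eta_V * ip_mu N N mu hV P - vnormsq N mu) / K_P N mu P"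
    unfolding alpha_V_def[of N mu P V'] ipV' ipEgV ..
  also have "\<dots> = alpha_V N mu P V + eta_V * K_Q N T mu Q * (1 - alpha_A N T mu Q A * alpha_V N mu P V) * alpha_A N T mu Q A
      + eta_V * (1 - alpha_V N mu P V) / real T
      - eta_V * alpha_V N mu P V * (normsq_mu T N mu A + (alpha_A N T mu Q A)^2 * normsq_mu T N mu Q
          + real T * ((1 - alpha_A N T mu Q A) / real T) * ((1 - alpha_A N T mu Q A) / real T)
          - 2 * alpha_A N T mu Q A * ip_mu T N mu A Q - 2 * ((1 - alpha_A N T mu Q A) / real T)
          + 2 * alpha_A N T mu Q A * ((1 - alpha_A N T mu Q A) / real T))
      - eta_V / K_P N mu P * ip_mu N N mu hV P"
    by (rule alg1[OF KP KQ Tn alpha_V_def alpha_A_def K_Q_def])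
  finally have c1': "alpha_V N mu P V' = alpha_V N mu P V + eta_V * K_Q N T mu Q * (1 - alpha_A N T mu Q A * alpha_V N mu P V) * alpha_A N T mu Q A
      + eta_V * (1 - alpha_V N mu P V) / real T
      - eta_V * alpha_V N mu P V * normsq_mu T N mu (Delta_A N T mu Q A)
      - eta_V / K_P N mu P * ip_mu N N mu hV P"
    unfolding Delta_A_def nDA[OF ctx] .
  have c2: "alpha_A N T mu Q A' = (ip_mu T N mu A Q - eta_A * (ip_mu T N mu A Q * (normsq_mu N N mu V - vnormsq N mu)
     - (ip_mu N N mu V P - vnormsq N mu) * normsq_mu T N mu Q
     - 1 / real T * (normsq_mu N N mu V - ip_mu N N mu V P)) - eta_A * ip_mu T N mu hA Q - 1 / real T) / K_Q N T mu Q"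
    unfolding alpha_A_def[of N T mu Q A'] ipA' ipEgA ..
  also have "\<dots> = alpha_A N T mu Q A + eta_A * K_P N mu P * (1 - alpha_V N mu P V * alpha_A N T mu Q A) * alpha_V N mu P V
      - eta_A * alpha_A N T mu Q A * (normsq_mu N N mu V + (alpha_V N mu P V)^2 * normsq_mu N N mu P
          + (1 - alpha_V N mu P V)^2 * vnormsq N mu - 2 * alpha_V N mu P V * ip_mu N N mu V P
          - 2 * ((1 - alpha_V N mu P V) * vnormsq N mu) + 2 * alpha_V N mu P V * ((1 - alpha_V N mu P V) * vnormsq N mu))
      - eta_A / K_Q N T mu Q * ip_mu T N mu hA Q"
    by (rule alg2[OF KP KQ Tn alpha_V_def alpha_A_def K_Q_def K_P_def])
  finally have c2': "alpha_A N T mu Q A' = alpha_A N T mu Q A + eta_A * K_P N mu P * (1 - alpha_V N mu P V * alpha_A N T mu Q A) * alpha_V N mu P V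
      - eta_A * alpha_A N T mu Q A * normsq_mu N N mu (Delta_V N mu P V)
      - eta_A / K_Q N T mu Q * ip_mu T N mu hA Q"
    unfolding Delta_V_def nDV[OF ctx] .
  show ?thesis using c1' c2' by simp
qed

end
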